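(* Let $\Phi \in \mathbb{R}^{m\times n}$ have unit $\ell_2$-norm columns $\phi_1,\dots,\phi_n$, let $X \in \mathbb{R}^{n\times K}$ with support $S=\mathrm{supp}(X)$, let $\overline{S}=[n]\setminus S$, assume $\Phi_S$ has full column rank, let $E\in\mathbb{R}^{m\times K}$ be arbitrary and $Y=\Phi X + E$. Let $q_1,\dots,q_K\ge 0$, $Q=\mathrm{diag}(q_1,\dots,q_K)$. Run SOMP-NS on $Y$, $\Phi$ with weights $q_k$, and let $t<|S|$ be such that all atoms selected before iteration $t$ belong to $S$, i.e. $S_t\subseteq S$. Let $P^{(t)}=\Phi_{S_t}\Phi_{S_t}^{+}$ (with $P^{(0)}=0$), $Z^{(t)}=(I-P^{(t)})\Phi X$ and $E^{(t)}=(I-P^{(t)})E$. If $$\left(1-\|\Phi_S^{+}\Phi_{\overline{S}}\|_{1}\right)\|\Phi_S^{\mathrm{T}} Z^{(t)} Q\|_{\infty} > 2\,\|\Phi^{\mathrm{T}} E^{(t)} Q\|_{\infty},$$ then the atom $j_t$ selected at iteration $t$ belongs to $S$ (regardless of tie-breaking).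
   Context: For $S\subseteq[n]$, $\Phi_S$ is the submatrix of columns indexed by $S$; $A^+$ is the Moore–Penrose pseudoinverse; $\|A\|_\infty=\max_i\sum_j|A_{i,j}|$ and $\|A\|_1=\max_j\sum_i|A_{i,j}|$. $\mathrm{supp}(X)$ is the set of row indices $i$ with $X_{i,k}\ne0$ for some $k$. Algorithm SOMP-NS, on input $Y\in\mathbb{R}^{m\times K}$, $\Phi$, weights $q_k\ge0$: set $S_0=\emptyset$, $R^{(0)}=Y$; at iteration $t=0,1,\dots$: choose $j_t\in\arg\max_{j\in[n]}\sum_{k=1}^K q_k|\langle r^{(t)}_k,\phi_j\rangle|$ where $r^{(t)}_k$ is the $k$-th column of $R^{(t)}$; set $S_{t+1}=S_t\cup\{j_t\}$ and $R^{(t+1)}=(I-\Phi_{S_{t+1}}\Phi_{S_{t+1}}^+)Y$. *)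

theory Defs
  imports "Jordan_Normal_Form.DL_Rank" "Jordan_Normal_Form.DL_Submatrix"
begin

definition cols_sub :: "real mat \<Rightarrow> nat set \<Rightarrow> real mat" where
  "cols_sub A S = submatrix A UNIV S"

definition pinv :: "real mat \<Rightarrow> real mat" where
  "pinv A = (THE B. B \<in> carrier_mat (dim_col A) (dim_row A) \<and>
     A * B * A = A \<and> B * A * B = B \<and>
     transpose_mat (A * B) = A * B \<and> transpose_mat (B * A) = B * A)"

definition norm_inf :: "real mat \<Rightarrow> real" where
  "norm_inf A = Max (insert 0 {(\<Sum>j<dim_col A. \<bar>A $$ (i,j)\<bar>) | i. i < dim_row A})"

definition norm_one :: "real mat \<Rightarrow> real" where
  "norm_one A = Max (insert 0 {(\<Sum>i<dim_row A. \<bar>A $$ (i,j)\<bar>) | j. j < dim_col A})"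

definition supp_rows :: "real mat \<Rightarrow> nat set" where
  "supp_rows X = {i. i < dim_row X \<and> (\<exists>k < dim_col X. X $$ (i,k) \<noteq> 0)}"

definition proj :: "real mat \<Rightarrow> nat set \<Rightarrow> real mat" where
  "proj Phi T = cols_sub Phi T * pinv (cols_sub Phi T)"

definition resid :: "real mat \<Rightarrow> nat set \<Rightarrow> real mat \<Rightarrow> real mat" where
  "resid Phi T Y = (1\<^sub>m (dim_row Phi) - proj Phi T) * Y"

definition somp_score :: "real mat \<Rightarrow> (nat \<Rightarrow> real) \<Rightarrow> real mat \<Rightarrow> nat \<Rightarrow> real" where
  "somp_score Phi q R j = (\<Sum>k<dim_col R. q k * \<bar>\<Sum>i<dim_row R. R $$ (i,k) * Phi $$ (i,j)\<bar>)"

definition somp_argmax :: "real mat \<Rightarrow> (nat \<Rightarrow> real) \<Rightarrow> real mat \<Rightarrow> nat set \<Rightarrow> nat \<Rightarrow> bool" where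
  "somp_argmax Phi q Y T j \<longleftrightarrow> j < dim_col Phi \<and>
     (\<forall>j' < dim_col Phi. somp_score Phi q (resid Phi T Y) j' \<le> somp_score Phi q (resid Phi T Y) j)"

definition somp_run :: "real mat \<Rightarrow> (nat \<Rightarrow> real) \<Rightarrow> real mat \<Rightarrow> (nat \<Rightarrow> nat) \<Rightarrow> nat \<Rightarrow> bool" where
  "somp_run Phi q Y sel t \<longleftrightarrow> (\<forall>s < t. somp_argmax Phi q Y (sel ` {..<s}) (sel s))"

end

theory Submission
  imports Defs
begin
definition idx :: "nat set \<Rightarrow> nat \<Rightarrow> nat" where "idx T j = card {a\<in>T. a < j}"

lemma pick_bij: assumes "finite T" shows "bij_betw (pick T) {..<card T} T"
proof (rule bij_betw_imageI)
  show "inj_on (pick T) {..<card T}"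
  proof (rule inj_onI)
    fix x y assume a: "x \<in> {..<card T}" "y \<in> {..<card T}" "pick T x = pick T y"
    have "card {a\<in>T. a < pick T x} = x" using card_pick[of x T] a(1) by simp
    moreover have "card {a\<in>T. a < pick T y} = y" using card_pick[of y T] a(2) by simp
    ultimately show "x = y" using a(3) by metis
  qed
  show "pick T ` {..<card T} = T"
  proof
    show "pick T ` {..<card T} \<subseteq> T"
    proof
      fix z assume "z \<in> pick T ` {..<card T}"
      then obtain x where "x < card T" "z = pick T x" by blast
      then show "z \<in> T" using pick_in_set[of x T] by simp
    qed
    show "T \<subseteq> pick T ` {..<card T}"
    proof
      fix j assume j: "j \<in> T"
      have "{a\<in>T. a < j} \<subset> T" using j by auto
      hence lt: "card {a\<in>T. a < j} < card T" using assms psubset_card_mono by blast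
      have eq: "pick T (card {a\<in>T. a < j}) = j" using pick_card_in_set[OF j] .
      show "j \<in> pick T ` {..<card T}"
      proof (rule image_eqI)
        show "j = pick T (card {a\<in>T. a < j})" using eq by (rule sym)
        show "card {a\<in>T. a < j} \<in> {..<card T}" using lt by (rule lessThan_iff[THEN iffD2])
      qed
    qed
  qed
qed


lemma sum_pick: assumes "finite T" shows "(\<Sum>b<card T. f (pick T b)) = (\<Sum>j\<in>T. f j)"
  using sum.reindex_bij_betw[OF pick_bij[OF assms]] by simp


lemma "True" by simp


lemma idx_props: assumes "finite T" "j \<in> T" shows "idx T j < card T" "pick T (idx T j) = j"
proof -
  have "{a\<in>T. a < j} \<subset> T" using assms by auto
  thus "idx T j < card T" unfolding idx_def using assms psubset_card_mono by blast
  show "pick T (idx T j) = j" unfolding idx_def using pick_card_in_set[OF assms(2)] .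
qed


lemma idx_pick: "b < card T \<Longrightarrow> idx T (pick T b) = b"
  unfolding idx_def using card_pick by auto


lemma cols_sub_carrier: assumes "Phi \<in> carrier_mat m n" "T \<subseteq> {..<n}"
  shows "cols_sub Phi T \<in> carrier_mat m (card T)"
proof -
  have 1: "{j. j < dim_col Phi \<and> j \<in> T} = T" using assms by auto
  have 2: "{i. i < dim_row Phi \<and> i \<in> (UNIV::nat set)} = {..<m}" using assms(1) by auto
  have r: "dim_row (submatrix Phi UNIV T) = m" unfolding dim_submatrix(1) 2 by simp
  have c: "dim_col (submatrix Phi UNIV T) = card T" unfolding dim_submatrix(2) 1 by simp
  show ?thesis unfolding cols_sub_def using r c by blast
qed


lemma cols_sub_index: assumes "Phi \<in> carrier_mat m n" "T \<subseteq> {..<n}" "i < m" "b < card T"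
  shows "cols_sub Phi T $$ (i,b) = Phi $$ (i, pick T b)"
proof -
  have "{j. j < dim_col Phi \<and> j \<in> T} = T" using assms(1,2) by auto
  moreover have "{i. i < dim_row Phi \<and> i \<in> (UNIV::nat set)} = {..<m}" using assms(1) by auto
  ultimately show ?thesis unfolding cols_sub_def using submatrix_index[of i Phi UNIV b T] assms
    by (simp add: pick_UNIV)
qed

context vec_space begin
lemma rank_le_card_cols: assumes "A \<in> carrier_mat n nc" shows "rank A \<le> card (set (cols A))"
proof -
  obtain S where "maximal S (\<lambda>T. T \<subseteq> set (cols A) \<and> lin_indpt T)"
    using maximal_exists[of "(\<lambda>T. T \<subseteq> set (cols A) \<and> lin_indpt T)" "card (set (cols A))" "{}"]
    by (meson List.finite_set card_mono empty_iff empty_subsetI finite_lin_indpt2 rev_finite_subset)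
  then have "card S \<le> card (set (cols A))" by (simp add: card_mono maximal_def)
  then show ?thesis
    using rank_card_indpt[OF \<open>A \<in> carrier_mat n nc\<close> \<open>maximal S (\<lambda>T. T \<subseteq> set (cols A) \<and> lin_indpt T)\<close>]
    by simp
qed

lemma rank_kernel: assumes A: "A \<in> carrier_mat n nc" and r: "rank A = nc"
  and v: "v \<in> carrier_vec nc" and Av: "A *\<^sub>v v = 0\<^sub>v n" shows "v = 0\<^sub>v nc"
proof (rule ccontr)
  assume nz: "v \<noteq> 0\<^sub>v nc"
  have len: "length (cols A) = nc" using A by simp
  have d: "distinct (cols A)"
  proof (rule ccontr)
    assume "\<not> distinct (cols A)"
    hence "card (set (cols A)) \<noteq> length (cols A)" using card_distinct by blast
    hence "card (set (cols A)) < nc" using card_length[of "cols A"] len by linarith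
    thus False using rank_le_card_cols[OF A] r by linarith
  qed
  have "lin_indpt (set (cols A))" using full_rank_lin_indpt[OF A r d] .
  moreover have "lin_dep (set (cols A))" using lin_depI[OF A v nz Av d] .
  ultimately show False by blast
qed
end


definition penrose :: "real mat \<Rightarrow> real mat \<Rightarrow> bool" where
  "penrose A B \<longleftrightarrow> B \<in> carrier_mat (dim_col A) (dim_row A) \<and>
     A * B * A = A \<and> B * A * B = B \<and>
     transpose_mat (A * B) = A * B \<and> transpose_mat (B * A) = B * A"

lemma penrose_unique: assumes A: "A \<in> carrier_mat nr nc" and pB: "penrose A B" and pC: "penrose A C"
  shows "B = C"
proof -
  have B: "B \<in> carrier_mat nc nr" and C: "C \<in> carrier_mat nc nr" using pB pC A unfolding penrose_def by auto
  have b1: "A * B * A = A" and b2: "B * A * B = B" and b3: "transpose_mat (A * B) = A * B"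
    and b4: "transpose_mat (B * A) = B * A" using pB unfolding penrose_def by auto
  have c1: "A * C * A = A" and c2: "C * A * C = C" and c3: "transpose_mat (A * C) = A * C"
    and c4: "transpose_mat (C * A) = C * A" using pC unfolding penrose_def by auto
  have TA: "transpose_mat A \<in> carrier_mat nc nr" and TB: "transpose_mat B \<in> carrier_mat nr nc"
    and TC: "transpose_mat C \<in> carrier_mat nr nc" using A B C by auto
  have AB: "A * B \<in> carrier_mat nr nr" and AC: "A * C \<in> carrier_mat nr nr"
    and BA: "B * A \<in> carrier_mat nc nc" and CA: "C * A \<in> carrier_mat nc nc" using A B C by auto
  have e1: "transpose_mat A = transpose_mat A * (A * C)"
  proof -
    have "transpose_mat A = transpose_mat ((A * C) * A)" using c1 by simp
    also have "\<dots> = transpose_mat A * transpose_mat (A * C)" using transpose_mult[OF AC A] .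
    finally show ?thesis using c3 by simp
  qed
  have e2: "transpose_mat A = (B * A) * transpose_mat A"
  proof -
    have "transpose_mat A = transpose_mat (A * (B * A))" using b1 assoc_mult_mat[OF A B A] by simp
    also have "\<dots> = transpose_mat (B * A) * transpose_mat A" using transpose_mult[OF A BA] .
    finally show ?thesis using b4 by simp
  qed
  have "B = B * (A * B)" using b2 assoc_mult_mat[OF B A B] by simp
  also have "\<dots> = B * (transpose_mat B * transpose_mat A)" using b3 transpose_mult[OF A B] by simp
  also have "\<dots> = B * (transpose_mat B * (transpose_mat A * (A * C)))" using e1 by simp
  also have "\<dots> = B * ((transpose_mat B * transpose_mat A) * (A * C))"
    using assoc_mult_mat[OF TB TA AC] by simp
  also have "\<dots> = B * ((A * B) * (A * C))" using b3 transpose_mult[OF A B] by simp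
  also have "\<dots> = (B * (A * B)) * (A * C)" using assoc_mult_mat[OF B AB AC] by simp
  also have "\<dots> = B * (A * C)" using b2 assoc_mult_mat[OF B A B] by simp
  finally have eB: "B = B * (A * C)" .
  have "C = (C * A) * C" using c2 by simp
  also have "\<dots> = (transpose_mat A * transpose_mat C) * C" using c4 transpose_mult[OF C A] by simp
  also have "\<dots> = (((B * A) * transpose_mat A) * transpose_mat C) * C" using e2 by simp
  also have "\<dots> = ((B * A) * (transpose_mat A * transpose_mat C)) * C"
    using assoc_mult_mat[OF BA TA TC] by simp
  also have "\<dots> = ((B * A) * (C * A)) * C" using c4 transpose_mult[OF C A] by simp
  also have "\<dots> = (B * A) * ((C * A) * C)" using assoc_mult_mat[OF BA CA C] by simp
  also have "\<dots> = (B * A) * C" using c2 by simp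
  also have "\<dots> = B * (A * C)" using assoc_mult_mat[OF B A C] by simp
  finally show ?thesis using eB by simp
qed


lemma penrose_exists: assumes A: "A \<in> carrier_mat nr nc"
  and ker: "\<And>v. v \<in> carrier_vec nc \<Longrightarrow> A *\<^sub>v v = 0\<^sub>v nr \<Longrightarrow> v = 0\<^sub>v nc"
  shows "\<exists>B. penrose A B"
proof -
  define G where "G = transpose_mat A * A"
  have TA: "transpose_mat A \<in> carrier_mat nc nr" using A by auto
  have G: "G \<in> carrier_mat nc nc" unfolding G_def using A by auto
  have TG: "transpose_mat G = G" unfolding G_def using transpose_mult[OF TA A] by simp
  have d: "det G \<noteq> 0"
  proof
    assume "det G = 0"
    then obtain v where v: "v \<in> carrier_vec nc" "v \<noteq> 0\<^sub>v nc" "G *\<^sub>v v = 0\<^sub>v nc"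
      using det_0_iff_vec_prod_zero_field[OF G] by blast
    define w where "w = A *\<^sub>v v"
    have w: "w \<in> carrier_vec nr" unfolding w_def using A v by auto
    have "(transpose_mat (transpose_mat A) *\<^sub>v v) \<bullet> w = v \<bullet> (transpose_mat A *\<^sub>v w)"
      using transpose_vec_mult_scalar[OF TA w v(1)] .
    also have "transpose_mat A *\<^sub>v w = G *\<^sub>v v" unfolding w_def G_def using TA A v(1) by simp
    finally have "w \<bullet> w = 0" using v(3) v(1) unfolding w_def by simp
    hence "(\<Sum>i\<in>{0..<nr}. w $ i * w $ i) = 0" using w unfolding scalar_prod_def by simp
    hence z: "\<forall>i\<in>{0..<nr}. w $ i * w $ i = 0"
      by (subst sum_nonneg_eq_0_iff[symmetric]) auto
    have "w = 0\<^sub>v nr"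
      by (rule eq_vecI, insert z w, auto)
    hence "v = 0\<^sub>v nc" using ker v(1) unfolding w_def by blast
    thus False using v(2) by blast
  qed
  from det_non_zero_imp_unit[OF G d, of "()"]
  obtain Gi where Gi: "Gi \<in> carrier_mat nc nc" "Gi * G = 1\<^sub>m nc" "G * Gi = 1\<^sub>m nc"
    unfolding Units_def ring_mat_def by auto
  have TGi: "transpose_mat Gi \<in> carrier_mat nc nc" using Gi by auto
  have sGi: "transpose_mat Gi = Gi"
  proof -
    have "transpose_mat Gi * G = transpose_mat (G * Gi)"
      using transpose_mult[OF G Gi(1)] TG by simp
    hence 1: "transpose_mat Gi * G = 1\<^sub>m nc" using Gi(3) by simp
    have "transpose_mat Gi = transpose_mat Gi * (G * Gi)" using Gi(3) TGi by simp
    also have "\<dots> = (transpose_mat Gi * G) * Gi" using assoc_mult_mat[OF TGi G Gi(1)] by simp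
    finally show ?thesis using 1 Gi(1) by simp
  qed
  define B where "B = Gi * transpose_mat A"
  have B: "B \<in> carrier_mat nc nr" unfolding B_def using Gi TA by auto
  have BA: "B * A = 1\<^sub>m nc" unfolding B_def using assoc_mult_mat[OF Gi(1) TA A] Gi(2) G_def by simp
  have p1: "A * B * A = A" using assoc_mult_mat[OF A B A] BA A by simp
  have p2: "B * A * B = B" using BA B by simp
  have p4: "transpose_mat (B * A) = B * A" using BA by simp
  have p3: "transpose_mat (A * B) = A * B"
  proof -
    have GiTA: "Gi * transpose_mat A \<in> carrier_mat nc nr" using Gi TA by auto
    have "transpose_mat (A * B) = transpose_mat (Gi * transpose_mat A) * transpose_mat A"
      unfolding B_def using transpose_mult[OF A GiTA] by simp
    also have "transpose_mat (Gi * transpose_mat A) = A * Gi"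
      using transpose_mult[OF Gi(1) TA] sGi by simp
    finally show ?thesis unfolding B_def using assoc_mult_mat[OF A Gi(1) TA] by simp
  qed
  have "penrose A B" unfolding penrose_def using A B p1 p2 p3 p4 by auto
  thus ?thesis by blast
qed

lemma pinv_penrose: assumes A: "A \<in> carrier_mat nr nc"
  and ker: "\<And>v. v \<in> carrier_vec nc \<Longrightarrow> A *\<^sub>v v = 0\<^sub>v nr \<Longrightarrow> v = 0\<^sub>v nc"
  shows "penrose A (pinv A)"
proof -
  obtain B where B: "penrose A B" using penrose_exists[OF A ker] by blast
  have "pinv A = B" unfolding pinv_def
  proof (rule the_equality)
    show "B \<in> carrier_mat (dim_col A) (dim_row A) \<and> A * B * A = A \<and> B * A * B = B \<and>
      transpose_mat (A * B) = A * B \<and> transpose_mat (B * A) = B * A" using B unfolding penrose_def .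
    fix C assume "C \<in> carrier_mat (dim_col A) (dim_row A) \<and> A * C * A = A \<and> C * A * C = C \<and>
      transpose_mat (A * C) = A * C \<and> transpose_mat (C * A) = C * A"
    hence "penrose A C" unfolding penrose_def .
    thus "C = B" using penrose_unique[OF A B] by simp
  qed
  thus ?thesis using B by simp
qed




lemma mult_mat_vec_entry: assumes "A \<in> carrier_mat nr nc" "v \<in> carrier_vec nc" "i < nr"
  shows "(A *\<^sub>v v) $ i = (\<Sum>k<nc. A $$ (i,k) * v $ k)"
  using assms by (auto simp: scalar_prod_def atLeast0LessThan intro!: sum.cong)

lemma ker_sub:
  assumes Phi: "Phi \<in> carrier_mat m n" and Sn: "S \<subseteq> {..<n}" and TS: "T \<subseteq> S"
    and kerS: "\<And>w. w \<in> carrier_vec (card S) \<Longrightarrow> cols_sub Phi S *\<^sub>v w = 0\<^sub>v m \<Longrightarrow> w = 0\<^sub>v (card S)"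
    and v: "v \<in> carrier_vec (card T)" and Tv: "cols_sub Phi T *\<^sub>v v = 0\<^sub>v m"
  shows "v = 0\<^sub>v (card T)"
proof -
  have fS: "finite S" using Sn finite_subset by blast
  have fT: "finite T" using TS fS finite_subset by blast
  have Tn: "T \<subseteq> {..<n}" using TS Sn by blast
  have AS: "cols_sub Phi S \<in> carrier_mat m (card S)" using cols_sub_carrier[OF Phi Sn] .
  have AT: "cols_sub Phi T \<in> carrier_mat m (card T)" using cols_sub_carrier[OF Phi Tn] .
  define w where "w = vec (card S) (\<lambda>a. if pick S a \<in> T then v $ idx T (pick S a) else 0)"
  have w: "w \<in> carrier_vec (card S)" unfolding w_def by simp
  have "cols_sub Phi S *\<^sub>v w = 0\<^sub>v m"
  proof (rule eq_vecI)
    show "dim_vec (cols_sub Phi S *\<^sub>v w) = dim_vec (0\<^sub>v m)" using AS by simp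
    fix i assume "i < dim_vec (0\<^sub>v m)"
    hence i: "i < m" by simp
    have "(cols_sub Phi S *\<^sub>v w) $ i = (\<Sum>a<card S. cols_sub Phi S $$ (i,a) * w $ a)"
      using mult_mat_vec_entry[OF AS w i] .
    also have "\<dots> = (\<Sum>a<card S. (\<lambda>j. Phi $$ (i,j) * (if j \<in> T then v $ idx T j else 0)) (pick S a))"
      by (rule sum.cong, simp, simp add: cols_sub_index[OF Phi Sn i] w_def)
    also have "\<dots> = (\<Sum>j\<in>S. Phi $$ (i,j) * (if j \<in> T then v $ idx T j else 0))"
      using sum_pick[OF fS] .
    also have "\<dots> = (\<Sum>j\<in>T. Phi $$ (i,j) * v $ idx T j)"
      by (rule sum.mono_neutral_cong_right[OF fS TS], auto)
    also have "\<dots> = (\<Sum>b<card T. (\<lambda>j. Phi $$ (i,j) * v $ idx T j) (pick T b))"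
      using sum_pick[OF fT, of "\<lambda>j. Phi $$ (i,j) * v $ idx T j"] by simp
    also have "\<dots> = (\<Sum>b<card T. cols_sub Phi T $$ (i,b) * v $ b)"
      by (rule sum.cong, simp, simp add: cols_sub_index[OF Phi Tn i] idx_pick)
    also have "\<dots> = (cols_sub Phi T *\<^sub>v v) $ i" using mult_mat_vec_entry[OF AT v i] by simp
    also have "\<dots> = 0" using Tv i by simp
    finally show "(cols_sub Phi S *\<^sub>v w) $ i = 0\<^sub>v m $ i" using i by simp
  qed
  hence w0: "w = 0\<^sub>v (card S)" using kerS[OF w] by blast
  show ?thesis
  proof (rule eq_vecI)
    show "dim_vec v = dim_vec (0\<^sub>v (card T))" using v by simp
    fix b assume "b < dim_vec (0\<^sub>v (card T))"
    hence b: "b < card T" by simp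
    have pT: "pick T b \<in> T" using pick_in_set[of b T] b by simp
    hence pS: "pick T b \<in> S" using TS by blast
    have ia: "idx S (pick T b) < card S" "pick S (idx S (pick T b)) = pick T b"
      using idx_props[OF fS pS] by auto
    have "w $ idx S (pick T b) = v $ b" unfolding w_def using ia pT idx_pick[OF b] by simp
    thus "v $ b = 0\<^sub>v (card T) $ b" using w0 ia(1) b by simp
  qed
qed



lemma mult_entry: assumes "A \<in> carrier_mat nr k" "B \<in> carrier_mat k nc" "i < nr" "j < nc"
  shows "(A * B) $$ (i,j) = (\<Sum>r<k. A $$ (i,r) * B $$ (r,j))"
  using assms by (auto simp: scalar_prod_def atLeast0LessThan intro!: sum.cong)

lemma mult_diag_entry: assumes "M \<in> carrier_mat r K" "a < r" "k < K"
  shows "(M * mat_diag K q) $$ (a,k) = M $$ (a,k) * q k"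
proof -
  have "(M * mat_diag K q) $$ (a,k) = (\<Sum>r<K. M $$ (a,r) * mat_diag K q $$ (r,k))"
    using mult_entry[OF assms(1) mat_diag_dim assms(2,3)] .
  also have "\<dots> = (\<Sum>r<K. if r = k then M $$ (a,k) * q k else 0)"
    using assms(3) by (intro sum.cong, simp, auto simp: mat_diag_def)
  also have "\<dots> = M $$ (a,k) * q k" using assms(3) by simp
  finally show ?thesis .
qed

lemma norm_inf_fin: "finite {(\<Sum>j<dim_col A. \<bar>A $$ (i,j)\<bar>) | i. i < dim_row A}"
  by (rule finite_image_set) simp

lemma norm_inf_ge: assumes "i < dim_row A" shows "(\<Sum>j<dim_col A. \<bar>A $$ (i,j)\<bar>) \<le> norm_inf A"
  unfolding norm_inf_def by (rule Max_ge, insert norm_inf_fin assms, auto)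

lemma norm_inf_nonneg: "0 \<le> norm_inf A"
  unfolding norm_inf_def by (rule Max_ge, insert norm_inf_fin, auto)

lemma norm_inf_attain: assumes "0 < norm_inf A"
  shows "\<exists>i < dim_row A. norm_inf A = (\<Sum>j<dim_col A. \<bar>A $$ (i,j)\<bar>)"
proof -
  have "norm_inf A \<in> insert 0 {(\<Sum>j<dim_col A. \<bar>A $$ (i,j)\<bar>) | i. i < dim_row A}"
    unfolding norm_inf_def by (rule Max_in, insert norm_inf_fin, auto)
  thus ?thesis using assms by auto
qed

lemma norm_one_ge: assumes "j < dim_col A" shows "(\<Sum>i<dim_row A. \<bar>A $$ (i,j)\<bar>) \<le> norm_one A"
proof -
  have "finite {(\<Sum>i<dim_row A. \<bar>A $$ (i,j)\<bar>) | j. j < dim_col A}" by (rule finite_image_set) simp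
  thus ?thesis unfolding norm_one_def by (intro Max_ge, insert assms, auto)
qed

lemma rowsum_diag: fixes M :: "real mat" and q :: "nat \<Rightarrow> real" assumes M: "M \<in> carrier_mat r K" and a: "a < r" and q: "\<forall>k<K. q k \<ge> 0"
  shows "(\<Sum>k<dim_col (M * mat_diag K q). \<bar>(M * mat_diag K q) $$ (a,k)\<bar>) = (\<Sum>k<K. q k * \<bar>M $$ (a,k)\<bar>)"
proof -
  have "dim_col (M * mat_diag K q) = K" using carrier_matD(2)[OF mat_diag_dim] by simp
  moreover have "\<And>k. k < K \<Longrightarrow> \<bar>(M * mat_diag K q) $$ (a,k)\<bar> = q k * \<bar>M $$ (a,k)\<bar>"
    using mult_diag_entry[OF M a] q by (simp add: abs_mult)
  ultimately show ?thesis by simp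
qed




theorem theorem2:
  fixes Phi X E :: "real mat" and m n K t :: nat and q :: "nat \<Rightarrow> real" and sel :: "nat \<Rightarrow> nat"
    and S :: "nat set"
  assumes Phi_dim: "Phi \<in> carrier_mat m n"
    and X_dim: "X \<in> carrier_mat n K"
    and E_dim: "E \<in> carrier_mat m K"
    and unit_cols: "\<forall>j < n. (\<Sum>i<m. (Phi $$ (i,j))\<^sup>2) = 1"
    and S_def: "S = supp_rows X"
    and full_rank: "vec_space.rank m (cols_sub Phi S) = card S"
    and q_nonneg: "\<forall>k < K. q k \<ge> 0"
    and run: "somp_run Phi q (Phi * X + E) sel t"
    and t_lt: "t < card S"
    and St_sub: "sel ` {..<t} \<subseteq> S"
    and cond: "(1 - norm_one (pinv (cols_sub Phi S) * cols_sub Phi ({..<n} - S)))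
                 * norm_inf (transpose_mat (cols_sub Phi S) * ((1\<^sub>m m - proj Phi (sel ` {..<t})) * (Phi * X))
                             * mat_diag K q)
               > 2 * norm_inf (transpose_mat Phi * ((1\<^sub>m m - proj Phi (sel ` {..<t})) * E) * mat_diag K q)"
  shows "\<forall>j. somp_argmax Phi q (Phi * X + E) (sel ` {..<t}) j \<longrightarrow> j \<in> S"
proof (intro allI impI)
  fix j assume jmax: "somp_argmax Phi q (Phi * X + E) (sel ` {..<t}) j"
  define T where "T = sel ` {..<t}"
  have Sn: "S \<subseteq> {..<n}" unfolding S_def supp_rows_def using X_dim by auto
  have fS: "finite S" using Sn finite_subset by blast
  have TS: "T \<subseteq> S" unfolding T_def using St_sub .
  have Tn: "T \<subseteq> {..<n}" using TS Sn by blast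
  define s where "s = card S"
  define AS where "AS = cols_sub Phi S"
  have AS: "AS \<in> carrier_mat m s" unfolding AS_def s_def using cols_sub_carrier[OF Phi_dim Sn] .
  have kerS: "\<And>w. w \<in> carrier_vec (card S) \<Longrightarrow> cols_sub Phi S *\<^sub>v w = 0\<^sub>v m \<Longrightarrow> w = 0\<^sub>v (card S)"
    using vec_space.rank_kernel[OF cols_sub_carrier[OF Phi_dim Sn] full_rank] by blast
  have pS: "penrose AS (pinv AS)" using pinv_penrose[OF AS] kerS unfolding AS_def s_def by blast
  define AT where "AT = cols_sub Phi T"
  have AT: "AT \<in> carrier_mat m (card T)" unfolding AT_def using cols_sub_carrier[OF Phi_dim Tn] .
  have pT: "penrose AT (pinv AT)" using pinv_penrose[OF AT] ker_sub[OF Phi_dim Sn TS kerS]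
    unfolding AT_def by blast
  define BT where "BT = pinv AT"
  have BT: "BT \<in> carrier_mat (card T) m" using pT AT unfolding BT_def penrose_def by auto
  define P where "P = proj Phi T"
  have P_eq: "P = AT * BT" unfolding P_def proj_def AT_def BT_def ..
  have P: "P \<in> carrier_mat m m" unfolding P_eq using AT BT by auto
  define Bp where "Bp = pinv AS"
  have Bp: "Bp \<in> carrier_mat s m" using pS AS unfolding Bp_def penrose_def by auto
  define Sb where "Sb = {..<n} - S"
  have Sbn: "Sb \<subseteq> {..<n}" unfolding Sb_def by auto
  have fSb: "finite Sb" unfolding Sb_def by auto
  define Ab where "Ab = cols_sub Phi Sb"
  have Ab: "Ab \<in> carrier_mat m (card Sb)" unfolding Ab_def using cols_sub_carrier[OF Phi_dim Sbn] .
  define M where "M = Bp * Ab"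
  have M: "M \<in> carrier_mat s (card Sb)" unfolding M_def using Bp Ab by auto
  define PS where "PS = AS * Bp"
  have PS: "PS \<in> carrier_mat m m" unfolding PS_def using AS Bp by auto
  have PX: "Phi * X \<in> carrier_mat m K" using Phi_dim X_dim by auto
  define Z where "Z = (1\<^sub>m m - P) * (Phi * X)"
  have IP: "1\<^sub>m m - P \<in> carrier_mat m m" using P by auto
  have Z: "Z \<in> carrier_mat m K" unfolding Z_def using IP PX by auto
  define E' where "E' = (1\<^sub>m m - P) * E"
  have E': "E' \<in> carrier_mat m K" unfolding E'_def using IP E_dim by auto
  define G where "G = transpose_mat AS * Z"
  have G: "G \<in> carrier_mat s K" unfolding G_def using AS Z by auto
  define H where "H = transpose_mat Phi * E'"
  have H: "H \<in> carrier_mat n K" unfolding H_def using Phi_dim E' by auto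
  define D where "D = mat_diag K q"
  define Av where "Av = norm_inf (G * D)"
  define Bv where "Bv = norm_inf (H * D)"
  define c where "c = norm_one M"
  have cond': "(1 - c) * Av > 2 * Bv"
    using cond unfolding c_def M_def Bp_def AS_def Ab_def Sb_def Av_def G_def Z_def P_def T_def
      Bv_def H_def E'_def D_def by simp
  have Bp_pen: "AS * Bp * AS = AS" "transpose_mat (AS * Bp) = AS * Bp"
    using pS unfolding Bp_def penrose_def by auto
  have PSAS: "PS * AS = AS" unfolding PS_def using Bp_pen(1) .
  have PSPhi: "(PS * Phi) $$ (i,j') = Phi $$ (i,j')" if i: "i < m" and j': "j' \<in> S" for i j'
  proof -
    have ia: "idx S j' < s" "pick S (idx S j') = j'" using idx_props[OF fS j'] s_def by auto
    have jn: "j' < n" using j' Sn by auto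
    have "(PS * Phi) $$ (i,j') = (\<Sum>r<m. PS $$ (i,r) * Phi $$ (r,j'))"
      using mult_entry[OF PS Phi_dim i jn] .
    also have "\<dots> = (\<Sum>r<m. PS $$ (i,r) * AS $$ (r, idx S j'))"
      by (rule sum.cong, simp, simp add: AS_def cols_sub_index[OF Phi_dim Sn _ ia(1)[unfolded s_def]] ia(2))
    also have "\<dots> = (PS * AS) $$ (i, idx S j')" using mult_entry[OF PS AS i ia(1)] by simp
    also have "\<dots> = AS $$ (i, idx S j')" using PSAS by simp
    also have "\<dots> = Phi $$ (i,j')" unfolding AS_def
      using cols_sub_index[OF Phi_dim Sn i ia(1)[unfolded s_def]] ia(2) by simp
    finally show ?thesis .
  qed
  have PSPX: "PS * (Phi * X) = Phi * X"
  proof (rule eq_matI)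
    show "dim_row (PS * (Phi * X)) = dim_row (Phi * X)" "dim_col (PS * (Phi * X)) = dim_col (Phi * X)"
      using PS PX by auto
    fix i k assume "i < dim_row (Phi * X)" "k < dim_col (Phi * X)"
    hence i: "i < m" and k: "k < K" using PX by auto
    have PSP: "PS * Phi \<in> carrier_mat m n" using PS Phi_dim by auto
    have "PS * (Phi * X) = (PS * Phi) * X" using assoc_mult_mat[OF PS Phi_dim X_dim] by simp
    hence "(PS * (Phi * X)) $$ (i,k) = (\<Sum>r<n. (PS * Phi) $$ (i,r) * X $$ (r,k))"
      using mult_entry[OF PSP X_dim i k] by simp
    also have "\<dots> = (\<Sum>r<n. Phi $$ (i,r) * X $$ (r,k))"
    proof (rule sum.cong)
      fix r assume r: "r \<in> {..<n}"
      show "(PS * Phi) $$ (i,r) * X $$ (r,k) = Phi $$ (i,r) * X $$ (r,k)"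
      proof (cases "r \<in> S")
        case True thus ?thesis using PSPhi[OF i] by simp
      next
        case False
        hence "X $$ (r,k) = 0" using r k X_dim unfolding S_def supp_rows_def by auto
        thus ?thesis by simp
      qed
    qed simp
    also have "\<dots> = (Phi * X) $$ (i,k)" using mult_entry[OF Phi_dim X_dim i k] by simp
    finally show "(PS * (Phi * X)) $$ (i,k) = (Phi * X) $$ (i,k)" .
  qed
  have PSAT: "PS * AT = AT"
  proof (rule eq_matI)
    show "dim_row (PS * AT) = dim_row AT" "dim_col (PS * AT) = dim_col AT" using PS AT by auto
    fix i b assume "i < dim_row AT" "b < dim_col AT"
    hence i: "i < m" and b: "b < card T" using AT by auto
    have pT: "pick T b \<in> T" using pick_in_set[of b T] b by simp
    have pS': "pick T b \<in> S" using pT TS by blast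
    have pn: "pick T b < n" using pT Tn by auto
    have "(PS * AT) $$ (i,b) = (\<Sum>r<m. PS $$ (i,r) * AT $$ (r,b))" using mult_entry[OF PS AT i b] .
    also have "\<dots> = (\<Sum>r<m. PS $$ (i,r) * Phi $$ (r, pick T b))"
      by (rule sum.cong, simp, simp add: AT_def cols_sub_index[OF Phi_dim Tn _ b])
    also have "\<dots> = (PS * Phi) $$ (i, pick T b)" using mult_entry[OF PS Phi_dim i pn] by simp
    also have "\<dots> = Phi $$ (i, pick T b)" using PSPhi[OF i pS'] .
    also have "\<dots> = AT $$ (i,b)" unfolding AT_def using cols_sub_index[OF Phi_dim Tn i b] by simp
    finally show "(PS * AT) $$ (i,b) = AT $$ (i,b)" .
  qed
  define W where "W = BT * (Phi * X)"
  have W: "W \<in> carrier_mat (card T) K" unfolding W_def using BT PX by auto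
  have ATW: "AT * W \<in> carrier_mat m K" using AT W by auto
  have Zeq: "Z = Phi * X - AT * W"
  proof -
    have "Z = 1\<^sub>m m * (Phi * X) - P * (Phi * X)"
      unfolding Z_def using minus_mult_distrib_mat[OF one_carrier_mat P PX] .
    also have "P * (Phi * X) = AT * W" unfolding P_eq W_def using assoc_mult_mat[OF AT BT PX] .
    finally show ?thesis using left_mult_one_mat[OF PX] by simp
  qed
  have PSZ: "PS * Z = Z"
  proof -
    have "PS * Z = PS * (Phi * X) - PS * (AT * W)" unfolding Zeq using mult_minus_distrib_mat[OF PS PX ATW] .
    also have "PS * (AT * W) = AT * W" using assoc_mult_mat[OF PS AT W] PSAT by simp
    finally show ?thesis using PSPX Zeq by simp
  qed
  have TBp: "transpose_mat Bp \<in> carrier_mat m s" and TAb: "transpose_mat Ab \<in> carrier_mat (card Sb) m"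
    and TAS: "transpose_mat AS \<in> carrier_mat s m" using Bp Ab AS by auto
  have KEY: "transpose_mat M * G = transpose_mat Ab * Z"
  proof -
    have "transpose_mat M * G = (transpose_mat Ab * transpose_mat Bp) * (transpose_mat AS * Z)"
      unfolding M_def G_def using transpose_mult[OF Bp Ab] by simp
    also have "\<dots> = transpose_mat Ab * (transpose_mat Bp * (transpose_mat AS * Z))"
      using assoc_mult_mat[OF TAb TBp G[unfolded G_def]] .
    also have "transpose_mat Bp * (transpose_mat AS * Z) = (transpose_mat Bp * transpose_mat AS) * Z"
      using assoc_mult_mat[OF TBp TAS Z] by simp
    also have "transpose_mat Bp * transpose_mat AS = PS"
      unfolding PS_def using transpose_mult[OF AS Bp] Bp_pen(2) by simp
    finally show ?thesis using PSZ by simp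
  qed
  have Gent: "G $$ (a,k) = (\<Sum>i<m. Z $$ (i,k) * Phi $$ (i, pick S a))" if a: "a < s" and k: "k < K" for a k
  proof -
    have "G $$ (a,k) = (\<Sum>r<m. transpose_mat AS $$ (a,r) * Z $$ (r,k))"
      unfolding G_def using mult_entry[OF TAS Z a k] .
    also have "\<dots> = (\<Sum>i<m. Z $$ (i,k) * Phi $$ (i, pick S a))"
    proof (rule sum.cong)
      fix r assume "r \<in> {..<m}" hence r: "r < m" by simp
      have "transpose_mat AS $$ (a,r) = AS $$ (r,a)" using AS a r by simp
      also have "\<dots> = Phi $$ (r, pick S a)" unfolding AS_def
        using cols_sub_index[OF Phi_dim Sn r a[unfolded s_def]] .
      finally show "transpose_mat AS $$ (a,r) * Z $$ (r,k) = Z $$ (r,k) * Phi $$ (r, pick S a)" by simp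
    qed simp
    finally show ?thesis .
  qed
  have Hent: "H $$ (j',k) = (\<Sum>i<m. E' $$ (i,k) * Phi $$ (i,j'))" if j': "j' < n" and k: "k < K" for j' k
  proof -
    have TP: "transpose_mat Phi \<in> carrier_mat n m" using Phi_dim by auto
    have "H $$ (j',k) = (\<Sum>r<m. transpose_mat Phi $$ (j',r) * E' $$ (r,k))"
      unfolding H_def using mult_entry[OF TP E' j' k] .
    also have "\<dots> = (\<Sum>i<m. E' $$ (i,k) * Phi $$ (i,j'))"
      by (rule sum.cong, simp, insert Phi_dim j', auto)
    finally show ?thesis .
  qed
  have KEYent: "(\<Sum>i<m. Z $$ (i,k) * Phi $$ (i,j')) = (\<Sum>a<s. M $$ (a, idx Sb j') * G $$ (a,k))"
    if j': "j' \<in> Sb" and k: "k < K" for j' k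
  proof -
    define l where "l = idx Sb j'"
    have l: "l < card Sb" "pick Sb l = j'" using idx_props[OF fSb j'] unfolding l_def by auto
    have TM: "transpose_mat M \<in> carrier_mat (card Sb) s" using M by auto
    have "(transpose_mat M * G) $$ (l,k) = (\<Sum>a<s. transpose_mat M $$ (l,a) * G $$ (a,k))"
      using mult_entry[OF TM G l(1) k] .
    also have "\<dots> = (\<Sum>a<s. M $$ (a,l) * G $$ (a,k))"
      by (rule sum.cong, simp, insert M l(1), auto)
    finally have 1: "(transpose_mat M * G) $$ (l,k) = (\<Sum>a<s. M $$ (a,l) * G $$ (a,k))" .
    have "(transpose_mat Ab * Z) $$ (l,k) = (\<Sum>i<m. transpose_mat Ab $$ (l,i) * Z $$ (i,k))"
      using mult_entry[OF TAb Z l(1) k] .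
    also have "\<dots> = (\<Sum>i<m. Z $$ (i,k) * Phi $$ (i,j'))"
    proof (rule sum.cong)
      fix i assume "i \<in> {..<m}" hence i: "i < m" by simp
      have "transpose_mat Ab $$ (l,i) = Ab $$ (i,l)" using Ab l(1) i by simp
      also have "\<dots> = Phi $$ (i,j')" unfolding Ab_def using cols_sub_index[OF Phi_dim Sbn i l(1)] l(2) by simp
      finally show "transpose_mat Ab $$ (l,i) * Z $$ (i,k) = Z $$ (i,k) * Phi $$ (i,j')" by simp
    qed simp
    finally show ?thesis using 1 KEY unfolding l_def by simp
  qed
  have Req: "resid Phi T (Phi * X + E) = Z + E'"
    unfolding resid_def P_def[symmetric] Z_def E'_def using mult_add_distrib_mat[OF IP PX E_dim] Phi_dim by simp
  have score: "somp_score Phi q (resid Phi T (Phi * X + E)) j' =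
      (\<Sum>k<K. q k * \<bar>(\<Sum>i<m. Z $$ (i,k) * Phi $$ (i,j')) + (\<Sum>i<m. E' $$ (i,k) * Phi $$ (i,j'))\<bar>)" for j'
  proof -
    have d: "dim_col (Z + E') = K" "dim_row (Z + E') = m" using E' by auto
    show ?thesis unfolding Req somp_score_def d
    proof (rule sum.cong)
      fix k assume "k \<in> {..<K}" hence k: "k < K" by simp
      have "(\<Sum>i<m. (Z + E') $$ (i,k) * Phi $$ (i,j')) =
          (\<Sum>i<m. Z $$ (i,k) * Phi $$ (i,j') + E' $$ (i,k) * Phi $$ (i,j'))"
        by (rule sum.cong, simp, insert E' k, auto simp: algebra_simps)
      thus "q k * \<bar>\<Sum>i<m. (Z + E') $$ (i,k) * Phi $$ (i,j')\<bar> =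
          q k * \<bar>(\<Sum>i<m. Z $$ (i,k) * Phi $$ (i,j')) + (\<Sum>i<m. E' $$ (i,k) * Phi $$ (i,j'))\<bar>"
        by (simp add: sum.distrib)
    qed simp
  qed
  have GD: "G * D \<in> carrier_mat s K" unfolding D_def using G by auto
  have HD: "H * D \<in> carrier_mat n K" unfolding D_def using H by auto
  have Av_ge: "(\<Sum>k<K. q k * \<bar>G $$ (a,k)\<bar>) \<le> Av" if a: "a < s" for a
    using norm_inf_ge[of a "G * D"] rowsum_diag[OF G a q_nonneg] GD a unfolding Av_def D_def by auto
  have Bv_ge: "(\<Sum>k<K. q k * \<bar>H $$ (j',k)\<bar>) \<le> Bv" if j': "j' < n" for j'
    using norm_inf_ge[of j' "H * D"] rowsum_diag[OF H j' q_nonneg] HD j' unfolding Bv_def D_def by auto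
  have c_ge: "(\<Sum>a<s. \<bar>M $$ (a,l)\<bar>) \<le> c" if l: "l < card Sb" for l
    using norm_one_ge[of l M] M l unfolding c_def by auto
  have Bv0: "0 \<le> Bv" unfolding Bv_def by (rule norm_inf_nonneg)
  have Av0: "0 \<le> Av" unfolding Av_def by (rule norm_inf_nonneg)
  have Avpos: "0 < Av"
  proof (rule ccontr)
    assume "\<not> 0 < Av" hence "Av = 0" using Av0 by simp
    thus False using cond' Bv0 by simp
  qed
  obtain a where a: "a < s" and Ava: "Av = (\<Sum>k<K. q k * \<bar>G $$ (a,k)\<bar>)"
  proof -
    obtain i where i: "i < dim_row (G * D)" and e: "Av = (\<Sum>k<dim_col (G * D). \<bar>(G * D) $$ (i,k)\<bar>)"
      using norm_inf_attain[OF Avpos[unfolded Av_def]] unfolding Av_def by blast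
    have i': "i < s" using i GD by auto
    show ?thesis using that[OF i'] e rowsum_diag[OF G i' q_nonneg] unfolding D_def by simp
  qed
  show "j \<in> S"
  proof (rule ccontr)
    assume jS: "j \<notin> S"
    have jn: "j < n" using jmax Phi_dim unfolding somp_argmax_def by auto
    have jSb: "j \<in> Sb" unfolding Sb_def using jn jS by auto
    define l where "l = idx Sb j"
    have l: "l < card Sb" using idx_props[OF fSb jSb] unfolding l_def by auto
    define i0 where "i0 = pick S a"
    have i0S: "i0 \<in> S" unfolding i0_def using pick_in_set[of a S] a s_def by simp
    have i0n: "i0 < n" using i0S Sn by auto
    let ?sc = "somp_score Phi q (resid Phi T (Phi * X + E))"
    have le: "?sc i0 \<le> ?sc j" using jmax i0n Phi_dim unfolding somp_argmax_def T_def by auto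
    have lower: "Av - Bv \<le> ?sc i0"
    proof -
      have "?sc i0 = (\<Sum>k<K. q k * \<bar>G $$ (a,k) + H $$ (i0,k)\<bar>)"
        unfolding score by (rule sum.cong, simp, simp add: Gent[OF a, folded i0_def] Hent[OF i0n])
      also have "\<dots> \<ge> (\<Sum>k<K. q k * \<bar>G $$ (a,k)\<bar> - q k * \<bar>H $$ (i0,k)\<bar>)"
      proof (rule sum_mono)
        fix k assume "k \<in> {..<K}" hence q0: "q k \<ge> 0" using q_nonneg by simp
        have "\<bar>G $$ (a,k)\<bar> - \<bar>H $$ (i0,k)\<bar> \<le> \<bar>G $$ (a,k) + H $$ (i0,k)\<bar>" by linarith
        from mult_left_mono[OF this q0]
        show "q k * \<bar>G $$ (a,k)\<bar> - q k * \<bar>H $$ (i0,k)\<bar> \<le> q k * \<bar>G $$ (a,k) + H $$ (i0,k)\<bar>"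
          by (simp add: algebra_simps)
      qed
      finally have "(\<Sum>k<K. q k * \<bar>G $$ (a,k)\<bar>) - (\<Sum>k<K. q k * \<bar>H $$ (i0,k)\<bar>) \<le> ?sc i0"
        by (simp add: sum_subtractf)
      thus ?thesis using Ava Bv_ge[OF i0n] by linarith
    qed
    have upper: "?sc j \<le> c * Av + Bv"
    proof -
      have "?sc j = (\<Sum>k<K. q k * \<bar>(\<Sum>a<s. M $$ (a,l) * G $$ (a,k)) + H $$ (j,k)\<bar>)"
        unfolding score by (rule sum.cong, simp, simp add: KEYent[OF jSb] Hent[OF jn] l_def)
      also have "\<dots> \<le> (\<Sum>k<K. (\<Sum>a<s. \<bar>M $$ (a,l)\<bar> * (q k * \<bar>G $$ (a,k)\<bar>)) + q k * \<bar>H $$ (j,k)\<bar>)"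
      proof (rule sum_mono)
        fix k assume "k \<in> {..<K}" hence q0: "q k \<ge> 0" using q_nonneg by simp
        have "\<bar>(\<Sum>a<s. M $$ (a,l) * G $$ (a,k)) + H $$ (j,k)\<bar> \<le> (\<Sum>a<s. \<bar>M $$ (a,l)\<bar> * \<bar>G $$ (a,k)\<bar>) + \<bar>H $$ (j,k)\<bar>"
        proof -
          have "\<bar>\<Sum>a<s. M $$ (a,l) * G $$ (a,k)\<bar> \<le> (\<Sum>a<s. \<bar>M $$ (a,l) * G $$ (a,k)\<bar>)" by (rule sum_abs)
          thus ?thesis by (simp add: abs_mult)
        qed
        from mult_left_mono[OF this q0]
        show "q k * \<bar>(\<Sum>a<s. M $$ (a,l) * G $$ (a,k)) + H $$ (j,k)\<bar> \<le> (\<Sum>a<s. \<bar>M $$ (a,l)\<bar> * (q k * \<bar>G $$ (a,k)\<bar>)) + q k * \<bar>H $$ (j,k)\<bar>"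
          by (simp add: algebra_simps sum_distrib_left)
      qed
      also have "\<dots> = (\<Sum>a<s. \<bar>M $$ (a,l)\<bar> * (\<Sum>k<K. q k * \<bar>G $$ (a,k)\<bar>)) + (\<Sum>k<K. q k * \<bar>H $$ (j,k)\<bar>)"
        by (simp add: sum.distrib sum_distrib_left sum.swap[of _ "{..<K}"])
      also have "\<dots> \<le> (\<Sum>a<s. \<bar>M $$ (a,l)\<bar> * Av) + Bv"
        by (rule add_mono[OF sum_mono Bv_ge[OF jn]], rule mult_left_mono, auto intro: Av_ge)
      also have "\<dots> = (\<Sum>a<s. \<bar>M $$ (a,l)\<bar>) * Av + Bv" by (simp add: sum_distrib_right)
      also have "\<dots> \<le> c * Av + Bv" using mult_right_mono[OF c_ge[OF l] Av0] by simp
      finally show ?thesis .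
    qed
    have "Av - Bv \<le> c * Av + Bv" using lower le upper by linarith
    hence "(1 - c) * Av \<le> 2 * Bv" by (simp add: algebra_simps)
    thus False using cond' by simp
  qed
qed

end
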